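(* Let $\mathbf{f} = (f_n)_{n\ge 1}$ be the ordinary paperfolding word over $\{0,1\}$, and let $\rho(n)$ denote its abelian complexity function (with $\rho(0)=1$). Then the sequence $(\rho(n))_{n\ge 0}$ is $2$-regular.
   Context: The ordinary paperfolding word $\mathbf{f}=(f_n)_{n\ge1}$ over $\{0,1\}$ is defined as follows: for $n\ge 1$ write $n=n'2^k$ with $n'$ odd; then $f_n=0$ if $n'\equiv 1 \pmod 4$ and $f_n=1$ if $n'\equiv 3\pmod 4$. Thus $\mathbf{f}=0010011000110110\cdots$. A factor of $\mathbf{f}$ is a finite contiguous block $f_i f_{i+1}\cdots f_{i+n-1}$. Two words $u,v$ over $\{0,1\}$ are abelian equivalent if one is a rearrangement of the other (equivalently, they have the same length and the same number of $0$'s). The abelian complexity $\rho(n)$ is the number of abelian equivalence classes among the factors of $\mathbf{f}$ of length $n$ (so $\rho(0)=1$). For an integer $k\ge2$ and an integer sequence $\mathbf{w}=(w(n))_{n\ge0}$, the $k$-kernel of $\mathbf{w}$ is the set of sequences $\{(w(k^e n+c))_{n\ge0} : e\ge0,\ 0\le c<k^e\}$; $\mathbf{w}$ is $k$-regular if the $\mathbb{Z}$-module generated by its $k$-kernel (together with the constant sequence $(1)_{n\ge0}$) is finitely generated. *)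

theory Defs
  imports Main "HOL-Library.Multiset"
begin

fun oddpart :: "nat \<Rightarrow> nat" where
  "oddpart n = (if n = 0 then 0 else if even n then oddpart (n div 2) else n)"

text \<open>Ordinary paperfolding word, f n for n \<ge> 1 (value at 0 is irrelevant/unused).\<close>
definition paperfold :: "nat \<Rightarrow> nat" where
  "paperfold n = (if oddpart n mod 4 = 1 then 0 else 1)"

definition pf_factor :: "nat \<Rightarrow> nat \<Rightarrow> nat list" where
  "pf_factor i n = map paperfold [i..<i+n]"

definition abelian_equiv :: "'a list \<Rightarrow> 'a list \<Rightarrow> bool" where
  "abelian_equiv u v \<longleftrightarrow> mset u = mset v"

definition pf_abelian_complexity :: "nat \<Rightarrow> nat" where
  "pf_abelian_complexity n =
     card ({pf_factor i n | i. i \<ge> 1} // {(u, v). abelian_equiv u v})"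

definition int_span :: "(nat \<Rightarrow> int) set \<Rightarrow> (nat \<Rightarrow> int) set" where
  "int_span S = {h. \<exists>F c. finite F \<and> F \<subseteq> S \<and> h = (\<lambda>n. \<Sum>g\<in>F. c g * g n)}"

definition k_kernel :: "nat \<Rightarrow> (nat \<Rightarrow> int) \<Rightarrow> (nat \<Rightarrow> int) set" where
  "k_kernel k w = {(\<lambda>n. w (k ^ e * n + c)) | e c. c < k ^ e}"

definition k_regular :: "nat \<Rightarrow> (nat \<Rightarrow> int) \<Rightarrow> bool" where
  "k_regular k w \<longleftrightarrow>
     (\<exists>G. finite G \<and> int_span G = int_span (insert (\<lambda>_. 1) (k_kernel k w)))"

end

theory Submission
  imports Defs
begin


lemma span_base: "g \<in> S \<Longrightarrow> g \<in> int_span S"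
  unfolding int_span_def by (rule CollectI, rule exI[of _ "{g}"], rule exI[of _ "\<lambda>_. 1"]) simp

lemma span_zero: "(\<lambda>_. 0) \<in> int_span S"
  unfolding int_span_def by (rule CollectI, rule exI[of _ "{}"]) simp

lemma span_add:
  assumes "f \<in> int_span S" "g \<in> int_span S"
  shows "(\<lambda>n. f n + g n) \<in> int_span S"
proof -
  obtain F c where F: "finite F" "F \<subseteq> S" "f = (\<lambda>n. \<Sum>h\<in>F. c h * h n)"
    using assms(1) unfolding int_span_def by blast
  obtain F' c' where F': "finite F'" "F' \<subseteq> S" "g = (\<lambda>n. \<Sum>h\<in>F'. c' h * h n)"
    using assms(2) unfolding int_span_def by blast
  define d where "d h = (if h \<in> F then c h else 0) + (if h \<in> F' then c' h else 0)" for h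
  have "(\<lambda>n. f n + g n) = (\<lambda>n. \<Sum>h\<in>F \<union> F'. d h * h n)"
  proof
    fix n
    have s1: "(\<Sum>h\<in>F \<union> F'. (if h \<in> F then c h else 0) * h n) = (\<Sum>h\<in>F. c h * h n)"
      by (rule sum.mono_neutral_cong_right) (use F F' in auto)
    have s2: "(\<Sum>h\<in>F \<union> F'. (if h \<in> F' then c' h else 0) * h n) = (\<Sum>h\<in>F'. c' h * h n)"
      by (rule sum.mono_neutral_cong_right) (use F F' in auto)
    show "f n + g n = (\<Sum>h\<in>F \<union> F'. d h * h n)"
      unfolding d_def distrib_right sum.distrib s1 s2 F(3) F'(3) ..
  qed
  then show ?thesis unfolding int_span_def using F F' by blast
qed

lemma span_smult:
  assumes "f \<in> int_span S"
  shows "(\<lambda>n. a * f n) \<in> int_span S"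
proof -
  obtain F c where F: "finite F" "F \<subseteq> S" "f = (\<lambda>n. \<Sum>h\<in>F. c h * h n)"
    using assms(1) unfolding int_span_def by blast
  have "(\<lambda>n. a * f n) = (\<lambda>n. \<Sum>h\<in>F. (a * c h) * h n)"
    unfolding F(3) sum_distrib_left mult.assoc ..
  then show ?thesis unfolding int_span_def using F(1,2)
    by (intro CollectI exI[of _ F] exI[of _ "\<lambda>h. a * c h"]) simp
qed

lemma span_sum:
  assumes "finite F" "\<forall>h\<in>F. h \<in> int_span S"
  shows "(\<lambda>n. \<Sum>h\<in>F. c h * h n) \<in> int_span S"
  using assms
proof (induction F rule: finite_induct)
  case empty then show ?case using span_zero by simp
next
  case (insert x F)
  have "(\<lambda>n. c x * x n + (\<Sum>h\<in>F. c h * h n)) \<in> int_span S"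
    using span_add[OF span_smult[of x S "c x"]] insert by simp
  then show ?case using insert by simp
qed

lemma span_sub: "S \<subseteq> int_span T \<Longrightarrow> int_span S \<subseteq> int_span T"
proof
  fix f assume "S \<subseteq> int_span T" "f \<in> int_span S"
  then obtain F c where F: "finite F" "F \<subseteq> S" "f = (\<lambda>n. \<Sum>h\<in>F. c h * h n)"
    unfolding int_span_def by blast
  show "f \<in> int_span T" unfolding F(3) by (rule span_sum) (use F \<open>S \<subseteq> int_span T\<close> in auto)
qed

definition P0 :: "(nat \<times> nat) set" where
  "P0 = {(0,0),(1,0),(1,1),(2,1),(2,3),(3,3),(3,5),(3,7)}"

lemma regular_from_ids:
  fixes w :: "nat \<Rightarrow> int"
  assumes I1: "\<And>n. w (4*n) = w (2*n)"
    and I2: "\<And>n. w (4*n+2) = w (2*n+1) + 1"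
    and I3: "\<And>n. w (8*n+1) = w (2*n) + 1"
    and I4: "\<And>n. w (16*n+3) = w (2*n+1) + 2"
    and I5: "\<And>n. w (16*n+11) = w (4*n+3) + 2"
    and I6: "\<And>n. w (16*n+5) = w (4*n+1) + 2"
    and I7: "\<And>n. w (16*n+13) = w (2*n+1) + 2"
    and I8: "\<And>n. w (16*n+7) = w (2*n+1) + 2"
    and I9: "\<And>n. w (16*n+15) = w (8*n+7)"
  shows "k_regular 2 w"
proof -
  have cl: "\<exists>e2 c2 j. (e2,c2) \<in> P0 \<and> (\<forall>n. w (2^(e1+1)*n + (2^e1*b + c1)) = w (2^e2*n+c2) + j)"
    if "(e1,c1) \<in> P0" "b < 2" for e1 c1 b
  proof -
    have c_0_0_0: "\<exists>e2 c2 j. (e2,c2) \<in> P0 \<and> (\<forall>n. w (2^(0+1)*n + (2^0*0 + 0)) = w (2^e2*n+c2) + j)"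
      by (rule exI[of _ 1], rule exI[of _ 0], rule exI[of _ 0]) (simp add: P0_def )
    have c_0_0_1: "\<exists>e2 c2 j. (e2,c2) \<in> P0 \<and> (\<forall>n. w (2^(0+1)*n + (2^0*1 + 0)) = w (2^e2*n+c2) + j)"
      by (rule exI[of _ 1], rule exI[of _ 1], rule exI[of _ 0]) (simp add: P0_def )
    have c_1_0_0: "\<exists>e2 c2 j. (e2,c2) \<in> P0 \<and> (\<forall>n. w (2^(1+1)*n + (2^1*0 + 0)) = w (2^e2*n+c2) + j)"
      by (rule exI[of _ 1], rule exI[of _ 0], rule exI[of _ 0]) (use I1 in \<open>simp add: P0_def\<close>)
    have c_1_0_1: "\<exists>e2 c2 j. (e2,c2) \<in> P0 \<and> (\<forall>n. w (2^(1+1)*n + (2^1*1 + 0)) = w (2^e2*n+c2) + j)"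
      by (rule exI[of _ 1], rule exI[of _ 1], rule exI[of _ 1]) (use I2 in \<open>simp add: P0_def\<close>)
    have c_1_1_0: "\<exists>e2 c2 j. (e2,c2) \<in> P0 \<and> (\<forall>n. w (2^(1+1)*n + (2^1*0 + 1)) = w (2^e2*n+c2) + j)"
      by (rule exI[of _ 2], rule exI[of _ 1], rule exI[of _ 0]) (simp add: P0_def )
    have c_1_1_1: "\<exists>e2 c2 j. (e2,c2) \<in> P0 \<and> (\<forall>n. w (2^(1+1)*n + (2^1*1 + 1)) = w (2^e2*n+c2) + j)"
      by (rule exI[of _ 2], rule exI[of _ 3], rule exI[of _ 0]) (simp add: P0_def )
    have c_2_1_0: "\<exists>e2 c2 j. (e2,c2) \<in> P0 \<and> (\<forall>n. w (2^(2+1)*n + (2^2*0 + 1)) = w (2^e2*n+c2) + j)"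
      by (rule exI[of _ 1], rule exI[of _ 0], rule exI[of _ 1]) (use I3 in \<open>simp add: P0_def\<close>)
    have c_2_1_1: "\<exists>e2 c2 j. (e2,c2) \<in> P0 \<and> (\<forall>n. w (2^(2+1)*n + (2^2*1 + 1)) = w (2^e2*n+c2) + j)"
      by (rule exI[of _ 3], rule exI[of _ 5], rule exI[of _ 0]) (simp add: P0_def )
    have c_2_3_0: "\<exists>e2 c2 j. (e2,c2) \<in> P0 \<and> (\<forall>n. w (2^(2+1)*n + (2^2*0 + 3)) = w (2^e2*n+c2) + j)"
      by (rule exI[of _ 3], rule exI[of _ 3], rule exI[of _ 0]) (simp add: P0_def )
    have c_2_3_1: "\<exists>e2 c2 j. (e2,c2) \<in> P0 \<and> (\<forall>n. w (2^(2+1)*n + (2^2*1 + 3)) = w (2^e2*n+c2) + j)"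
      by (rule exI[of _ 3], rule exI[of _ 7], rule exI[of _ 0]) (simp add: P0_def )
    have c_3_3_0: "\<exists>e2 c2 j. (e2,c2) \<in> P0 \<and> (\<forall>n. w (2^(3+1)*n + (2^3*0 + 3)) = w (2^e2*n+c2) + j)"
      by (rule exI[of _ 1], rule exI[of _ 1], rule exI[of _ 2]) (use I4 in \<open>simp add: P0_def\<close>)
    have c_3_3_1: "\<exists>e2 c2 j. (e2,c2) \<in> P0 \<and> (\<forall>n. w (2^(3+1)*n + (2^3*1 + 3)) = w (2^e2*n+c2) + j)"
      by (rule exI[of _ 2], rule exI[of _ 3], rule exI[of _ 2]) (use I5 in \<open>simp add: P0_def\<close>)
    have c_3_5_0: "\<exists>e2 c2 j. (e2,c2) \<in> P0 \<and> (\<forall>n. w (2^(3+1)*n + (2^3*0 + 5)) = w (2^e2*n+c2) + j)"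
      by (rule exI[of _ 2], rule exI[of _ 1], rule exI[of _ 2]) (use I6 in \<open>simp add: P0_def\<close>)
    have c_3_5_1: "\<exists>e2 c2 j. (e2,c2) \<in> P0 \<and> (\<forall>n. w (2^(3+1)*n + (2^3*1 + 5)) = w (2^e2*n+c2) + j)"
      by (rule exI[of _ 1], rule exI[of _ 1], rule exI[of _ 2]) (use I7 in \<open>simp add: P0_def\<close>)
    have c_3_7_0: "\<exists>e2 c2 j. (e2,c2) \<in> P0 \<and> (\<forall>n. w (2^(3+1)*n + (2^3*0 + 7)) = w (2^e2*n+c2) + j)"
      by (rule exI[of _ 1], rule exI[of _ 1], rule exI[of _ 2]) (use I8 in \<open>simp add: P0_def\<close>)
    have c_3_7_1: "\<exists>e2 c2 j. (e2,c2) \<in> P0 \<and> (\<forall>n. w (2^(3+1)*n + (2^3*1 + 7)) = w (2^e2*n+c2) + j)"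
      by (rule exI[of _ 3], rule exI[of _ 7], rule exI[of _ 0]) (use I9 in \<open>simp add: P0_def\<close>)
    have b01: "b = 0 \<or> b = 1" using that(2) by auto
    have "e1 = 0 \<and> c1 = 0 \<or> e1 = 1 \<and> c1 = 0 \<or> e1 = 1 \<and> c1 = 1 \<or> e1 = 2 \<and> c1 = 1 \<or>
          e1 = 2 \<and> c1 = 3 \<or> e1 = 3 \<and> c1 = 3 \<or> e1 = 3 \<and> c1 = 5 \<or> e1 = 3 \<and> c1 = 7"
      using that(1) unfolding P0_def by simp
    then show ?thesis using b01 c_0_0_0 c_0_0_1 c_1_0_0 c_1_0_1 c_1_1_0 c_1_1_1 c_2_1_0 c_2_1_1 c_2_3_0 c_2_3_1 c_3_3_0 c_3_3_1 c_3_5_0 c_3_5_1 c_3_7_0 c_3_7_1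
      by (elim disjE conjE; simp)
  qed
  have red: "\<exists>e' c' j. (e',c') \<in> P0 \<and> (\<forall>n. w (2^e*n+c) = w (2^e'*n+c') + j)"
    if "c < 2^e" for e c
    using that
  proof (induction e arbitrary: c)
    case 0
    then show ?case by (intro exI[of _ 0]) (simp add: P0_def)
  next
    case (Suc e)
    define b where "b = c div 2^e"
    define c0 where "c0 = c mod 2^e"
    have b: "b < 2" using Suc.prems unfolding b_def by (simp add: less_mult_imp_div_less)
    have c0: "c0 < 2^e" unfolding c0_def by simp
    have cc: "c = 2^e * b + c0" unfolding b_def c0_def by simp
    obtain e1 c1 j where P: "(e1,c1) \<in> P0" and eq: "\<forall>m. w (2^e*m+c0) = w (2^e1*m+c1) + j"
      using Suc.IH[OF c0] by blast
    obtain e2 c2 j' where P2: "(e2,c2) \<in> P0" and eq2: "\<forall>n. w (2^(e1+1)*n + (2^e1*b + c1)) = w (2^e2*n+c2) + j'"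
      using cl[OF P b] by blast
    have "\<forall>n. w (2^Suc e*n+c) = w (2^e2*n+c2) + (j' + j)"
    proof
      fix n
      have "w (2^Suc e*n+c) = w (2^e*(2*n+b)+c0)" unfolding cc by (simp add: algebra_simps)
      also have "\<dots> = w (2^e1*(2*n+b)+c1) + j" using eq by simp
      also have "2^e1*(2*n+b)+c1 = 2^(e1+1)*n + (2^e1*b + c1)" by (simp add: algebra_simps)
      finally show "w (2^Suc e*n+c) = w (2^e2*n+c2) + (j' + j)" using eq2 by simp
    qed
    then show ?case using P2 by blast
  qed
  define G where "G = insert (\<lambda>_. 1) ((\<lambda>(e,c). (\<lambda>n. w (2^e*n+c))) ` P0)"
  have fin: "finite G" unfolding G_def P0_def by simp
  have "int_span G \<subseteq> int_span (insert (\<lambda>_. 1) (k_kernel 2 w))"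
  proof (rule span_sub, rule subsetI)
    fix g assume "g \<in> G"
    then have "g = (\<lambda>_. 1) \<or> (\<exists>e c. (e,c) \<in> P0 \<and> g = (\<lambda>n. w (2^e*n+c)))"
      unfolding G_def by auto
    then consider "g = (\<lambda>_. 1)" | e c where "(e,c) \<in> P0" "g = (\<lambda>n. w (2^e*n+c))"
      by blast
    then show "g \<in> int_span (insert (\<lambda>_. 1) (k_kernel 2 w))"
    proof cases
      case 1 then show ?thesis by (auto intro: span_base)
    next
      case 2
      have "c < 2^e" using 2(1) unfolding P0_def by auto
      then have "g \<in> k_kernel 2 w" unfolding k_kernel_def 2(2) by blast
      then show ?thesis by (auto intro: span_base)
    qed
  qed
  moreover have "int_span (insert (\<lambda>_. 1) (k_kernel 2 w)) \<subseteq> int_span G"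
  proof (rule span_sub, rule subsetI)
    fix g assume "g \<in> insert (\<lambda>_. 1) (k_kernel 2 w)"
    then consider "g = (\<lambda>_. 1)" | e c where "c < 2^e" "g = (\<lambda>n. w (2^e*n+c))"
      unfolding k_kernel_def by blast
    then show "g \<in> int_span G"
    proof cases
      case 1 then show ?thesis unfolding G_def by (auto intro: span_base)
    next
      case 2
      then obtain e' c' j where P: "(e',c') \<in> P0" and eq: "\<forall>n. w (2^e*n+c) = w (2^e'*n+c') + j"
        using red by blast
      have a: "(\<lambda>n. w (2^e'*n+c')) \<in> int_span G" unfolding G_def using P by (auto intro!: span_base)
      have b: "(\<lambda>n. j * 1) \<in> int_span G" by (rule span_smult, rule span_base) (simp add: G_def)
      have "g = (\<lambda>n. w (2^e'*n+c') + j * 1)" using 2 eq by auto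
      then show ?thesis using span_add[OF a b] by simp
    qed
  qed
  ultimately show ?thesis unfolding k_regular_def using fin by blast
qed




fun runs :: "nat \<Rightarrow> nat" where
  "runs n = (if n = 0 then 0 else runs (n div 2) + (if (n div 2) mod 2 = n mod 2 then 0 else 1))"
declare runs.simps[simp del]

lemma runs_0[simp]: "runs 0 = 0" by (simp add: runs.simps)

lemma runs_1[simp]: "runs 1 = 1" by (subst runs.simps) simp

lemma runs_Suc0[simp]: "runs (Suc 0) = 1" by (subst runs.simps) simp

lemma runs_2x: "a < 2 \<Longrightarrow> runs (2*x + a) = runs x + (if x mod 2 = a then 0 else 1)"
proof (cases "x = 0 \<and> a = 0")
  case True then show ?thesis by simp
next
  case False
  assume a: "a < 2"
  have "2*x+a \<noteq> 0" using False by auto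
  then show ?thesis using a by (subst runs.simps) auto
qed

lemma runs_2[simp]: "runs (Suc (Suc 0)) = 2"
  using runs_2x[of 0 1] by (simp add: numeral_eq_Suc)

definition st0 :: "int list \<Rightarrow> int list" where
  "st0 xs = [max (xs!0) (xs!3), max (xs!0 - 1) (xs!3 + 1), max (xs!0 + 1) (xs!3 - 1), max (xs!0) (xs!3), max (xs!2 + 1) (xs!5 - 1), max (xs!2) (xs!5), max (xs!2) (xs!5), max (xs!2 - 1) (xs!5 + 1)]"
definition st1 :: "int list \<Rightarrow> int list" where
  "st1 xs = [max (xs!2 + 1) (xs!5 - 1), max (xs!2) (xs!5), max (xs!2) (xs!5), max (xs!2 - 1) (xs!5 + 1), max (xs!4) (xs!7), max (xs!4 - 1) (xs!7 + 1), max (xs!4 + 1) (xs!7 - 1), max (xs!4) (xs!7)]"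
definition QL :: "int list list" where
  "QL = [[0, 1, 1, 0, 2, 1, 1, 2], [0, -1, -1, 0, 0, 1, 1, 0], [0, 1, 1, 0, 0, 1, 1, 2], [0, 1, 1, 2, 0, 1, 1, 0], [0, 1, -1, 0, 0, -1, -1, 0], [0, -1, -1, 0, -2, -1, -1, -2], [0, 1, 1, 0, 0, -1, -1, 0], [0, 1, 1, 0, 2, 1, 1, 0], [0, -1, -1, -2, -2, -1, -1, -2], [0, -1, 1, 0, 0, -1, -1, 0], [0, -1, -1, 0, 0, -1, 1, 0], [0, -1, -1, 0, 0, 1, -1, 0]]"

definition stepL :: "nat \<Rightarrow> int list \<Rightarrow> int list" where
  "stepL b = (if b = 0 then st0 else st1)"

definition H0 :: "int list" where "H0 = [0, 1, 1, 0, 2, 1, 1, 2]"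

definition T :: "int list \<Rightarrow> nat \<Rightarrow> nat \<Rightarrow> nat \<Rightarrow> nat \<Rightarrow> nat \<Rightarrow> int" where
  "T h b c u v a = of_bool ((a+b+c) mod 2 \<noteq> u) - of_bool (a \<noteq> v)
     + h ! (4*((a+b+c) div 2) + 2*((a+b+c) mod 2) + a)"

lemma two_cases: "(x::nat) < 2 \<Longrightarrow> x = 0 \<or> x = 1" by auto

lemma stepL_nth: "c<2 \<Longrightarrow> u<2 \<Longrightarrow> v<2 \<Longrightarrow> b<2 \<Longrightarrow>
  stepL b h ! (4*c+2*u+v) = max (T h b c u v 0) (T h b c u v 1)"
  apply (drule two_cases)+
  apply (elim disjE)
  apply (simp_all add: stepL_def st0_def st1_def T_def)
  by (simp_all add: numeral_eq_Suc ac_simps)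

function Hd :: "nat \<Rightarrow> int list" where
  "Hd n = (if n = 0 then H0 else stepL (n mod 2) (Hd (n div 2)))"
  by auto
termination by (relation "measure id") auto
declare Hd.simps[simp del]

lemma st0_H0: "st0 H0 = H0" by (simp add: st0_def H0_def)

lemma Hd_rec: "Hd n = stepL (n mod 2) (Hd (n div 2))"
  by (cases "n = 0") (simp_all add: Hd.simps stepL_def st0_H0)

lemma Hd_0: "Hd 0 = H0" by (simp add: Hd.simps)

definition vl :: "nat \<Rightarrow> nat \<Rightarrow> nat \<Rightarrow> nat \<Rightarrow> nat \<Rightarrow> int" where
  "vl z n c u v = int (runs (z+n+c)) - int (runs z) + of_bool ((z+n+c) mod 2 \<noteq> u) - of_bool (z mod 2 \<noteq> v)"

lemma vl_rec:
  assumes "a < 2" "b < 2" "c < 2"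
  shows "vl (2*z+a) (2*n+b) c u v = of_bool ((a+b+c) mod 2 \<noteq> u) - of_bool (a \<noteq> v)
           + vl z n ((a+b+c) div 2) ((a+b+c) mod 2) a"
proof -
  have e: "2*z+a+(2*n+b)+c = 2*(z+n+(a+b+c) div 2) + (a+b+c) mod 2" by simp
  have r1: "runs (2*z+a+(2*n+b)+c) = runs (z+n+(a+b+c) div 2) +
      (if (z+n+(a+b+c) div 2) mod 2 = (a+b+c) mod 2 then 0 else 1)"
    unfolding e by (rule runs_2x) simp
  have r2: "runs (2*z+a) = runs z + (if z mod 2 = a then 0 else 1)" using assms by (simp add: runs_2x)
  have m1: "(2*z+a+(2*n+b)+c) mod 2 = (a+b+c) mod 2" by presburger
  have m2: "(2*z+a) mod 2 = a" using assms by simp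
  show ?thesis unfolding vl_def r1 r2 m1 m2 by (simp add: ac_simps)
qed

lemma vl_base: "c<2 \<Longrightarrow> u<2 \<Longrightarrow> v<2 \<Longrightarrow> vl 0 0 c u v \<le> H0 ! (4*c+2*u+v)"
  apply (drule two_cases)+
  apply (elim disjE)
  by (simp_all add: vl_def H0_def)

lemma T_ge: "a < 2 \<Longrightarrow> T h b c u v a \<le> max (T h b c u v 0) (T h b c u v 1)"
  by (drule two_cases) auto

lemma vl_le: "c<2 \<Longrightarrow> u<2 \<Longrightarrow> v<2 \<Longrightarrow> vl z n c u v \<le> Hd n ! (4*c+2*u+v)"
proof (induction "z+n" arbitrary: z n c u v rule: less_induct)
  case less
  show ?case
  proof (cases "z = 0 \<and> n = 0")
    case True
    then show ?thesis using vl_base[OF less.prems] by (simp add: Hd_0)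
  next
    case False
    define a where "a = z mod 2"
    define b where "b = n mod 2"
    have z: "z = 2*(z div 2) + a" and n: "n = 2*(n div 2) + b" unfolding a_def b_def by simp_all
    have ab: "a < 2" "b < 2" unfolding a_def b_def by simp_all
    have lt: "z div 2 + n div 2 < z + n" using False by auto
    have IH: "vl (z div 2) (n div 2) ((a+b+c) div 2) ((a+b+c) mod 2) a
       \<le> Hd (n div 2) ! (4*((a+b+c) div 2) + 2*((a+b+c) mod 2) + a)"
      using less.hyps[OF lt] ab less.prems by auto
    have "vl z n c u v = of_bool ((a+b+c) mod 2 \<noteq> u) - of_bool (a \<noteq> v)
           + vl (z div 2) (n div 2) ((a+b+c) div 2) ((a+b+c) mod 2) a"
      using vl_rec[OF ab less.prems(1), of "z div 2" "n div 2" u v] z n by simp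
    also have "\<dots> \<le> T (Hd (n div 2)) b c u v a" unfolding T_def using IH by simp
    also have "\<dots> \<le> stepL b (Hd (n div 2)) ! (4*c+2*u+v)"
      using stepL_nth[OF less.prems ab(2)] T_ge[OF ab(1)] by simp
    also have "\<dots> = Hd n ! (4*c+2*u+v)" using Hd_rec[of n] b_def by simp
    finally show ?thesis .
  qed
qed

lemma vl_att: "c<2 \<Longrightarrow> u<2 \<Longrightarrow> v<2 \<Longrightarrow> \<exists>z. vl z n c u v = Hd n ! (4*c+2*u+v)"
proof (induction n arbitrary: c u v rule: less_induct)
  case (less n)
  show ?case
  proof (cases "n = 0")
    case True
    have "\<exists>z. vl z 0 c u v = H0 ! (4*c+2*u+v)"
      using less.prems
      apply -
      apply (drule two_cases)+
      apply (elim disjE)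
      apply (rule exI[where x=0], simp add: vl_def H0_def)
      apply (rule exI[where x=1], simp add: vl_def H0_def)
      apply (rule exI[where x=0], simp add: vl_def H0_def)
      apply (rule exI[where x=0], simp add: vl_def H0_def)
      apply (rule exI[where x=0], simp add: vl_def H0_def)
      apply (rule exI[where x=0], simp add: vl_def H0_def)
      apply (rule exI[where x=0], simp add: vl_def H0_def)
      apply (rule exI[where x=1], simp add: vl_def H0_def)
      done
    then show ?thesis using True by (simp add: Hd_0)
  next
    case False
    define b where "b = n mod 2"
    have n: "n = 2*(n div 2) + b" unfolding b_def by simp
    have b: "b < 2" unfolding b_def by simp
    have lt: "n div 2 < n" using False by simp
    obtain a where a: "a < 2" and am: "max (T (Hd (n div 2)) b c u v 0) (T (Hd (n div 2)) b c u v 1) = T (Hd (n div 2)) b c u v a"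
    proof (cases "T (Hd (n div 2)) b c u v 0 \<le> T (Hd (n div 2)) b c u v 1")
      case True then show ?thesis using that[of 1] by (simp add: max_def)
    next
      case False then show ?thesis using that[of 0] by (simp add: max_def)
    qed
    have cd: "(a+b+c) div 2 < 2" using a b less.prems(1) by presburger
    obtain z where z: "vl z (n div 2) ((a+b+c) div 2) ((a+b+c) mod 2) a
       = Hd (n div 2) ! (4*((a+b+c) div 2) + 2*((a+b+c) mod 2) + a)"
      using less.IH[OF lt, of "(a+b+c) div 2" "(a+b+c) mod 2" a] a cd by auto
    have "vl (2*z+a) n c u v = of_bool ((a+b+c) mod 2 \<noteq> u) - of_bool (a \<noteq> v)
           + vl z (n div 2) ((a+b+c) div 2) ((a+b+c) mod 2) a"
      using vl_rec[OF a b less.prems(1), of z "n div 2" u v] n by simp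
    also have "\<dots> = T (Hd (n div 2)) b c u v a" unfolding T_def z by simp
    also have "\<dots> = stepL b (Hd (n div 2)) ! (4*c+2*u+v)"
      using stepL_nth[OF less.prems b] am by simp
    also have "\<dots> = Hd n ! (4*c+2*u+v)" using Hd_rec[of n] b_def by simp
    finally show ?thesis by blast
  qed
qed




definition norm8 :: "int list \<Rightarrow> int list" where "norm8 d = map (\<lambda>x. x - d!0) d"

lemma len_st: "length (st0 xs) = 8" "length (st1 xs) = 8" "length (stepL b xs) = 8"
  by (simp_all add: st0_def st1_def stepL_def)

lemma mx1: "max (a + k) (b + k) = max a b + (k::int)" by (simp add: max_def)
lemma mx2: "max (a + k - 1) (b + k + 1) = max (a - 1) (b + 1) + (k::int)" by (simp add: max_def)
lemma mx3: "max (a + k + 1) (b + k - 1) = max (a + 1) (b - 1) + (k::int)" by (simp add: max_def)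

lemma shift_st0: "length xs = 8 \<Longrightarrow> st0 (map (\<lambda>x. x + k) xs) = map (\<lambda>x. x + k) (st0 xs)"
  by (simp add: st0_def mx1 mx2 mx3)
lemma shift_st1: "length xs = 8 \<Longrightarrow> st1 (map (\<lambda>x. x + k) xs) = map (\<lambda>x. x + k) (st1 xs)"
  by (simp add: st1_def mx1 mx2 mx3)
lemma shift_stepL: "length xs = 8 \<Longrightarrow> stepL b (map (\<lambda>x. x + k) xs) = map (\<lambda>x. x + k) (stepL b xs)"
  by (simp add: stepL_def shift_st0 shift_st1)

lemma QL_len: "\<forall>d\<in>set QL. length d = 8" by (simp add: QL_def)

lemma QL_closed: "\<forall>d\<in>set QL. norm8 (st0 d) \<in> set QL \<and> norm8 (st1 d) \<in> set QL"
  unfolding QL_def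
  apply (simp only: list.set ball_simps)
  by (simp add: st0_def st1_def norm8_def)

lemma H0_QL: "H0 \<in> set QL" by (simp add: QL_def H0_def)

lemma norm8_back: "xs = map (\<lambda>x. x + xs!0) (norm8 xs)"
  by (simp add: norm8_def map_idI)

lemma reach: "\<exists>k. \<exists>d\<in>set QL. Hd n = map (\<lambda>x. x + k) d"
proof (induction n rule: less_induct)
  case (less n)
  show ?case
  proof (cases "n = 0")
    case True
    then show ?thesis using H0_QL by (intro exI[of _ 0] bexI[of _ H0]) (simp_all add: Hd_0)
  next
    case False
    then obtain k d where d: "d \<in> set QL" and h: "Hd (n div 2) = map (\<lambda>x. x + k) d"
      using less.IH[of "n div 2"] by auto
    have l: "length d = 8" using QL_len d by auto
    have "Hd n = stepL (n mod 2) (map (\<lambda>x. x + k) d)" using Hd_rec[of n] h by simp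
    also have "\<dots> = map (\<lambda>x. x + k) (stepL (n mod 2) d)" using shift_stepL[OF l] by simp
    also have "\<dots> = map (\<lambda>x. x + k) (map (\<lambda>x. x + stepL (n mod 2) d ! 0) (norm8 (stepL (n mod 2) d)))"
      using norm8_back[of "stepL (n mod 2) d"] by simp
    also have "\<dots> = map (\<lambda>x. x + (k + stepL (n mod 2) d ! 0)) (norm8 (stepL (n mod 2) d))"
      by (simp add: ac_simps)
    finally have e: "Hd n = map (\<lambda>x. x + (k + stepL (n mod 2) d ! 0)) (norm8 (stepL (n mod 2) d))" .
    have "norm8 (stepL (n mod 2) d) \<in> set QL" using QL_closed d by (simp add: stepL_def)
    with e show ?thesis by blast
  qed
qed

definition runL :: "nat list \<Rightarrow> int list \<Rightarrow> int list" where
  "runL bs h = foldl (\<lambda>h b. stepL b h) h bs"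

definition valL :: "nat list \<Rightarrow> nat \<Rightarrow> nat" where
  "valL bs n = foldl (\<lambda>x b. 2*x+b) n bs"

lemma Hd2: "b < 2 \<Longrightarrow> Hd (2*m+b) = stepL b (Hd m)"
  using Hd_rec[of "2*m+b"] by simp

lemma Hd_runL: "\<forall>b\<in>set bs. b<2 \<Longrightarrow> Hd (valL bs n) = runL bs (Hd n)"
proof (induction bs rule: rev_induct)
  case Nil then show ?case by (simp add: valL_def runL_def)
next
  case (snoc b bs)
  then show ?case by (simp add: valL_def runL_def Hd2)
qed

lemma len_runL: "length h = 8 \<Longrightarrow> length (runL bs h) = 8"
  by (induction bs rule: rev_induct) (simp_all add: runL_def len_st)

lemma shift_runL: "length h = 8 \<Longrightarrow> runL bs (map (\<lambda>x. x + k) h) = map (\<lambda>x. x + k) (runL bs h)"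
proof (induction bs rule: rev_induct)
  case Nil then show ?case by (simp add: runL_def)
next
  case (snoc b bs)
  have "length (runL bs h) = 8" using len_runL snoc.prems by blast
  then show ?case using snoc shift_stepL by (simp add: runL_def)
qed

definition rhoH :: "int list \<Rightarrow> nat \<Rightarrow> int" where
  "rhoH h b = 1 + (if b = 0 then max (h ! 0) (h ! 3) else max (h ! 2) (h ! 5))"

lemma shift_rhoH: "length h = 8 \<Longrightarrow> b < 2 \<Longrightarrow> rhoH (map (\<lambda>x. x + k) h) b = rhoH h b + k"
  by (drule two_cases[of b]) (auto simp: rhoH_def mx1)

lemma ident:
  assumes "\<forall>d\<in>set QL. rhoH (runL bs d) b = rhoH (runL bs' d) b' + j" "b < 2" "b' < 2"
  shows "rhoH (runL bs (Hd n)) b = rhoH (runL bs' (Hd n)) b' + j"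
proof -
  obtain k d where d: "d \<in> set QL" and h: "Hd n = map (\<lambda>x. x + k) d" using reach by blast
  have l: "length d = 8" using QL_len d by auto
  show ?thesis using assms(1) d unfolding h shift_runL[OF l]
    by (simp add: shift_rhoH[OF len_runL[OF l] assms(2)] shift_rhoH[OF len_runL[OF l] assms(3)])
qed

lemma checks:
  "\<forall>d\<in>set QL. rhoH (runL [0] d) 0 = rhoH (runL [] d) 0 + 0"
  "\<forall>d\<in>set QL. rhoH (runL [1] d) 0 = rhoH (runL [] d) 1 + 1"
  "\<forall>d\<in>set QL. rhoH (runL [0,0] d) 1 = rhoH (runL [] d) 0 + 1"
  "\<forall>d\<in>set QL. rhoH (runL [0,0,1] d) 1 = rhoH (runL [] d) 1 + 2"
  "\<forall>d\<in>set QL. rhoH (runL [1,0,1] d) 1 = rhoH (runL [1] d) 1 + 2"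
  "\<forall>d\<in>set QL. rhoH (runL [0,1,0] d) 1 = rhoH (runL [0] d) 1 + 2"
  "\<forall>d\<in>set QL. rhoH (runL [1,1,0] d) 1 = rhoH (runL [] d) 1 + 2"
  "\<forall>d\<in>set QL. rhoH (runL [0,1,1] d) 1 = rhoH (runL [] d) 1 + 2"
  "\<forall>d\<in>set QL. rhoH (runL [1,1,1] d) 1 = rhoH (runL [1,1] d) 1 + 0"
  unfolding QL_def
  by (simp only: list.set ball_simps; simp add: rhoH_def runL_def stepL_def st0_def st1_def)+




declare oddpart.simps[simp del]

lemma oddpart_even: "m > 0 \<Longrightarrow> oddpart (2*m) = oddpart m"
  by (subst oddpart.simps) simp

lemma oddpart_odd: "odd n \<Longrightarrow> oddpart n = n"
  by (subst oddpart.simps) auto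

lemma pf_even: "m > 0 \<Longrightarrow> paperfold (2*m) = paperfold m"
  unfolding paperfold_def by (simp add: oddpart_even)

lemma pf_1: "paperfold (4*m+1) = 0"
proof -
  have "odd (4*m+1)" by simp
  then show ?thesis unfolding paperfold_def by (simp add: oddpart_odd)
qed

lemma pf_3: "paperfold (4*m+3) = 1"
proof -
  have "odd (4*m+3)" by presburger
  moreover have "(4*m+3) mod 4 = (3::nat)" by simp
  ultimately show ?thesis unfolding paperfold_def by (simp add: oddpart_odd)
qed

lemma pf_le1: "paperfold j \<le> 1" unfolding paperfold_def by simp

definition g :: "nat \<Rightarrow> int" where "g j = 1 - 2 * int (paperfold j)"

lemma runs_step: "int (runs (Suc j)) = int (runs j) + g (Suc j)"
proof (induction j rule: less_induct)
  case (less j)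
  show ?case
  proof (cases "even j")
    case True
    then obtain x where j: "j = 2*x" by blast
    have r1: "runs (Suc j) = runs x + (if x mod 2 = 1 then 0 else 1)"
      using runs_2x[of 1 x] j by simp
    have r0: "runs j = runs x + (if x mod 2 = 0 then 0 else 1)"
      using runs_2x[of 0 x] j by simp
    show ?thesis
    proof (cases "even x")
      case True
      then obtain y where "x = 2*y" by blast
      then have e: "Suc j = 4*y+1" using j by simp
      have "g (Suc j) = 1" unfolding g_def e pf_1 by simp
      then show ?thesis using r1 r0 True by simp
    next
      case False
      then obtain y where "x = 2*y+1" using oddE by blast
      then have e: "Suc j = 4*y+3" using j by simp
      have "g (Suc j) = -1" unfolding g_def e pf_3 by simp
      then show ?thesis using r1 r0 False by (simp add: odd_iff_mod_2_eq_one)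
    qed
  next
    case False
    then obtain x where j: "j = 2*x+1" using oddE by blast
    have r1: "runs (Suc j) = runs (Suc x) + (if Suc x mod 2 = 0 then 0 else 1)"
      using runs_2x[of 0 "Suc x"] j by simp
    have r0: "runs j = runs x + (if x mod 2 = 1 then 0 else 1)"
      using runs_2x[of 1 x] j by simp
    have IH: "int (runs (Suc x)) = int (runs x) + g (Suc x)" using less.IH[of x] j by simp
    have "g (Suc j) = g (Suc x)" unfolding g_def using pf_even[of "Suc x"] j by simp
    then show ?thesis using r1 r0 IH by (simp split: if_splits; presburger)
  qed
qed

definition D :: "nat \<Rightarrow> nat \<Rightarrow> int" where "D n z = int (runs (z+n)) - int (runs z)"

definition cnt :: "nat \<Rightarrow> nat \<Rightarrow> nat" where "cnt n z = count (mset (pf_factor (Suc z) n)) 1"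

lemma cnt_D: "int n - 2 * int (cnt n z) = D n z"
proof (induction n)
  case 0 then show ?case by (simp add: cnt_def D_def pf_factor_def)
next
  case (Suc n)
  have l: "pf_factor (Suc z) (Suc n) = pf_factor (Suc z) n @ [paperfold (Suc z + n)]"
    unfolding pf_factor_def by (simp add: upt_Suc_append)
  have c: "cnt (Suc n) z = cnt n z + paperfold (Suc z + n)"
    unfolding cnt_def l using pf_le1[of "Suc z + n"] by (auto simp: le_Suc_eq)
  have d: "D (Suc n) z = D n z + g (Suc (z + n))"
    unfolding D_def using runs_step[of "z+n"] by simp
  show ?case using Suc c d by (simp add: g_def algebra_simps)
qed

lemma D_step: "D n (Suc z) \<le> D n z + 2 \<and> D n z \<le> D n (Suc z) + 2"
proof -
  have "D n (Suc z) = D n z + g (Suc (z+n)) - g (Suc z)"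
    unfolding D_def using runs_step[of "z+n"] runs_step[of z] by simp
  moreover have "\<And>j. g j \<le> 1 \<and> g j \<ge> -1" unfolding g_def using pf_le1 by force
  ultimately show ?thesis by (smt (verit))
qed

lemma D_par: "even (D n z - D n z')"
proof -
  have "D n z - D n z' = 2 * (int (cnt n z') - int (cnt n z))"
    using cnt_D[of n z] cnt_D[of n z'] by (smt (verit))
  then show ?thesis by simp
qed

lemma ivt:
  fixes f :: "nat \<Rightarrow> int"
  assumes st: "\<And>z. f (Suc z) \<le> f z + 2 \<and> f z \<le> f (Suc z) + 2"
    and par: "\<And>z. even (f z - t)"
  shows "(f a \<le> t \<and> t \<le> f (a+k)) \<or> (f (a+k) \<le> t \<and> t \<le> f a) \<Longrightarrow> \<exists>z. f z = t"
proof (induction k)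
  case 0 then show ?case by auto
next
  case (Suc k)
  show ?case
  proof (cases "(f a \<le> t \<and> t \<le> f (a+k)) \<or> (f (a+k) \<le> t \<and> t \<le> f a)")
    case True then show ?thesis using Suc.IH by blast
  next
    case False
    have s: "f (Suc (a+k)) \<le> f (a+k) + 2" "f (a+k) \<le> f (Suc (a+k)) + 2" using st by blast+
    have p1: "even (f (a+k) - t)" "even (f (Suc (a+k)) - t)" using par by blast+
    have "f (a+k) < t \<and> t \<le> f (Suc (a+k)) \<or> f (Suc (a+k)) \<le> t \<and> t < f (a+k)"
      using False Suc.prems by auto
    then have "f (Suc (a+k)) = t" using s p1 by presburger
    then show ?thesis by blast
  qed
qed




definition Mdp :: "nat \<Rightarrow> int" where "Mdp n = rhoH (Hd (n div 2)) (n mod 2) - 1"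

lemma D_rec:
  assumes "a < 2" "b < 2"
  shows "D (2*n+b) (2*z+a) = vl z n ((a+b) div 2) ((a+b) mod 2) a"
proof -
  have e: "2*z+a+(2*n+b) = 2*(z+n+(a+b) div 2) + (a+b) mod 2" by simp
  have r1: "runs (2*z+a+(2*n+b)) = runs (z+n+(a+b) div 2) +
      (if (z+n+(a+b) div 2) mod 2 = (a+b) mod 2 then 0 else 1)"
    unfolding e by (rule runs_2x) simp
  have r2: "runs (2*z+a) = runs z + (if z mod 2 = a then 0 else 1)" using assms by (simp add: runs_2x)
  show ?thesis unfolding D_def vl_def r1 r2 by (simp add: ac_simps)
qed

lemma rhoH0: "rhoH h 0 - 1 = max (h!0) (h!3)" by (simp add: rhoH_def)
lemma rhoH1: "rhoH h 1 - 1 = max (h!2) (h!5)" by (simp add: rhoH_def)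
lemma rhoH1': "rhoH h (Suc 0) - 1 = max (h!2) (h!5)" by (simp add: rhoH_def)

lemma idx_eq: "(a::nat)<2 \<Longrightarrow> b<2 \<Longrightarrow> 4*((a+b) div 2) + 2*((a+b) mod 2) + a =
   (if b = 0 then (if a = 0 then 0 else 3) else (if a = 0 then 2 else 5))"
proof -
  assume "a < 2" "b < 2"
  then have "a = 0 \<or> a = 1" "b = 0 \<or> b = 1" by auto
  then show ?thesis by (elim disjE) simp_all
qed

lemma idx_le:
  assumes "a < 2" "b < 2"
  shows "Hd m ! (4*((a+b) div 2) + 2*((a+b) mod 2) + a) \<le> rhoH (Hd m) b - 1"
proof -
  have "b = 0 \<or> b = 1" using assms by auto
  then show ?thesis unfolding idx_eq[OF assms]
    by (elim disjE) (auto simp: rhoH0 rhoH1 rhoH1')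
qed

lemma idx_ex:
  assumes "b < 2"
  shows "\<exists>a<2. Hd m ! (4*((a+b) div 2) + 2*((a+b) mod 2) + a) = rhoH (Hd m) b - 1"
proof -
  have "b = 0 \<or> b = 1" using assms by auto
  then show ?thesis
  proof
    assume b: "b = 0"
    show ?thesis
    proof (cases "Hd m ! 3 \<le> Hd m ! 0")
      case True then show ?thesis using b by (intro exI[of _ 0]) (simp add: rhoH0 numeral_3_eq_3)
    next
      case False then show ?thesis using b by (intro exI[of _ 1]) (simp add: rhoH0 numeral_3_eq_3)
    qed
  next
    assume b: "b = 1"
    show ?thesis
    proof (cases "Hd m ! 5 \<le> Hd m ! 2")
      case True then show ?thesis using b by (intro exI[of _ 0]) (simp add: rhoH1 rhoH1' eval_nat_numeral)
    next
      case False then show ?thesis using b by (intro exI[of _ 1]) (simp add: rhoH1 rhoH1' eval_nat_numeral)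
    qed
  qed
qed

lemma D_le: "D n z \<le> Mdp n"
proof -
  have a: "z mod 2 < 2" and b: "n mod 2 < 2" by simp_all
  have c: "(z mod 2 + n mod 2) div 2 < 2" "(z mod 2 + n mod 2) mod 2 < 2" by presburger+
  have "D n z = D (2*(n div 2) + n mod 2) (2*(z div 2) + z mod 2)" by simp
  also have "\<dots> = vl (z div 2) (n div 2) ((z mod 2 + n mod 2) div 2) ((z mod 2 + n mod 2) mod 2) (z mod 2)"
    by (rule D_rec[OF a b])
  also have "\<dots> \<le> Hd (n div 2) ! (4*((z mod 2 + n mod 2) div 2) + 2*((z mod 2 + n mod 2) mod 2) + z mod 2)"
    by (rule vl_le[OF c a])
  also have "\<dots> \<le> Mdp n" unfolding Mdp_def by (rule idx_le[OF a b])
  finally show ?thesis .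
qed

lemma D_att: "\<exists>z. D n z = Mdp n"
proof -
  have b: "n mod 2 < 2" by simp
  obtain a where a: "a < 2" and ha: "Hd (n div 2) ! (4*((a+n mod 2) div 2) + 2*((a+n mod 2) mod 2) + a) = Mdp n"
    using idx_ex[OF b, of "n div 2"] unfolding Mdp_def by blast
  have c: "(a + n mod 2) div 2 < 2" "(a + n mod 2) mod 2 < 2" using a by presburger+
  obtain z where z: "vl z (n div 2) ((a + n mod 2) div 2) ((a + n mod 2) mod 2) a
     = Hd (n div 2) ! (4*((a+n mod 2) div 2) + 2*((a+n mod 2) mod 2) + a)"
    using vl_att[OF c a] by blast
  have "D n (2*z+a) = D (2*(n div 2) + n mod 2) (2*z+a)" by simp
  also have "\<dots> = Mdp n" unfolding D_rec[OF a b] z ha ..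
  finally show ?thesis by blast
qed

lemma runs_compl: "x < 2^k \<Longrightarrow> runs (2^(Suc k) - 1 - x) = runs x + 1"
proof (induction k arbitrary: x)
  case 0 then show ?case by simp
next
  case (Suc k)
  define a where "a = x mod 2"
  define y where "y = x div 2"
  define P :: nat where "P = 2^(Suc k)"
  define P' :: nat where "P' = 2^k"
  have PP: "P = 2 * P'" unfolding P_def P'_def by simp
  have P2: "2^(Suc (Suc k)) = 2 * P" unfolding P_def by simp
  have a: "a < 2" unfolding a_def by simp
  have x: "x = 2*y + a" unfolding a_def y_def by simp
  have y: "y < 2^k" using Suc.prems unfolding y_def by (simp add: less_mult_imp_div_less)
  then have yP: "y < P'" unfolding P'_def .
  define q where "q = P - 1 - y"
  have e: "2^(Suc (Suc k)) - 1 - x = 2*q + (1 - a)"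
    unfolding P2 q_def x using yP PP a by linarith
  have qy: "q + y + 1 = 2*P'" unfolding q_def using yP PP by linarith
  have qm: "q mod 2 = 1 - y mod 2" using qy by presburger
  have m: "q mod 2 = 1 - a \<longleftrightarrow> y mod 2 = a"
    unfolding qm using a by auto
  have "runs (2^(Suc (Suc k)) - 1 - x) = runs q + (if q mod 2 = 1 - a then 0 else 1)"
    unfolding e by (rule runs_2x) simp
  also have "\<dots> = runs y + 1 + (if y mod 2 = a then 0 else 1)"
    using Suc.IH[OF y] m unfolding q_def P_def by simp
  also have "\<dots> = runs x + 1" unfolding x using runs_2x[OF a, of y] by simp
  finally show ?case .
qed

lemma D_sym: "\<exists>z'. D n z' = - D n z"
proof -
  define k where "k = z + n"
  have k: "z + n < 2^k" unfolding k_def by (rule less_exp)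
  define z' where "z' = 2^(Suc k) - 1 - (z+n)"
  have k2: "z + n < 2^(Suc k)" using k by simp
  have "z' + n = 2^(Suc k) - 1 - z" unfolding z'_def using k2 by simp
  then have "D n z' = int (runs z + 1) - int (runs (z+n) + 1)"
    unfolding D_def using runs_compl[of z k] runs_compl[of "z+n" k] k z'_def by simp
  then show ?thesis unfolding D_def by auto
qed

lemma Mdp_nonneg: "Mdp n \<ge> 0"
proof -
  obtain z where z: "D n z = Mdp n" using D_att by blast
  obtain z' where "D n z' = - D n z" using D_sym by blast
  then show ?thesis using D_le[of n z'] z by simp
qed

lemma range_D: "range (D n) = (\<lambda>k. 2 * int k - Mdp n) ` {0..nat (Mdp n)}"
proof
  obtain z1 where z1: "D n z1 = Mdp n" using D_att by blast
  have M0: "Mdp n \<ge> 0" by (rule Mdp_nonneg)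
  show "range (D n) \<subseteq> (\<lambda>k. 2 * int k - Mdp n) ` {0..nat (Mdp n)}"
  proof
    fix d assume "d \<in> range (D n)"
    then obtain z where d: "d = D n z" by blast
    obtain z' where z': "D n z' = - D n z" using D_sym by blast
    have lo: "- Mdp n \<le> d" using D_le[of n z'] z' d by simp
    have hi: "d \<le> Mdp n" using D_le[of n z] d by simp
    have ev: "even (d - Mdp n)" using D_par[of n z z1] d z1 by simp
    then obtain j0 where "d - Mdp n = 2 * j0" by (rule evenE)
    then have j: "d + Mdp n = 2 * (j0 + Mdp n)" by simp
    define j where "j = j0 + Mdp n"
    note j = j[folded j_def]
    have "d = 2 * int (nat j) - Mdp n" "nat j \<in> {0..nat (Mdp n)}" using j lo hi M0 by auto
    then show "d \<in> (\<lambda>k. 2 * int k - Mdp n) ` {0..nat (Mdp n)}" by blast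
  qed
  show "(\<lambda>k. 2 * int k - Mdp n) ` {0..nat (Mdp n)} \<subseteq> range (D n)"
  proof
    fix t assume "t \<in> (\<lambda>k. 2 * int k - Mdp n) ` {0..nat (Mdp n)}"
    then obtain k where k: "k \<le> nat (Mdp n)" "t = 2 * int k - Mdp n" by auto
    obtain z2 where z2: "D n z2 = - Mdp n" using D_sym[of n z1] z1 by auto
    have par: "\<And>z. even (D n z - t)"
    proof -
      fix z
      have e1: "even (D n z - D n z1)" by (rule D_par)
      have e2: "D n z - t = (D n z - D n z1) + 2*(Mdp n - int k)" using k z1 by simp
      show "even (D n z - t)" unfolding e2 by (rule dvd_add[OF e1]) simp
    qed
    have tb: "- Mdp n \<le> t" "t \<le> Mdp n" using k M0 by auto
    have "\<exists>z. D n z = t"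
    proof (cases "z1 \<le> z2")
      case True
      have h: "D n (z1 + (z2 - z1)) \<le> t \<and> t \<le> D n z1" using True z1 z2 tb by simp
      show ?thesis
        by (rule ivt[of "D n" t z1 "z2 - z1", OF D_step par]) (use h in blast)
    next
      case False
      have h: "D n z2 \<le> t \<and> t \<le> D n (z2 + (z1 - z2))" using False z1 z2 tb by simp
      show ?thesis
        by (rule ivt[of "D n" t z2 "z1 - z2", OF D_step par]) (use h in blast)
    qed
    then show "t \<in> range (D n)" by auto
  qed
qed

lemma card_range_D: "card (range (D n)) = nat (Mdp n) + 1"
proof -
  have "inj_on (\<lambda>k. 2 * int k - Mdp n) {0..nat (Mdp n)}" by (auto simp: inj_on_def)
  then show ?thesis unfolding range_D by (simp add: card_image)
qed




declare oddpart.simps[simp del]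

definition MS :: "nat \<Rightarrow> nat \<Rightarrow> nat multiset" where
  "MS n k = replicate_mset (n - k) 0 + replicate_mset k 1"

lemma mset01: "set x \<subseteq> {0,1} \<Longrightarrow> count (mset x) 1 \<le> length x \<and>
   mset x = replicate_mset (length x - count (mset x) 1) (0::nat) + replicate_mset (count (mset x) 1) 1"
proof (induction x)
  case Nil then show ?case by simp
next
  case (Cons y ys)
  then have IH: "count (mset ys) 1 \<le> length ys"
    "mset ys = replicate_mset (length ys - count (mset ys) 1) 0 + replicate_mset (count (mset ys) 1) 1"
    and y: "y = 0 \<or> y = 1" by auto
  from y show ?case
  proof
    assume "y = 0"
    then show ?thesis using IH by (simp add: Suc_diff_le)
  next
    assume "y = 1"
    then show ?thesis using IH by simp
  qed
qed

lemma mset_pf: "mset (pf_factor (Suc z) n) = MS n (cnt n z)"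
proof -
  have s: "set (pf_factor (Suc z) n) \<subseteq> {0,1}"
    unfolding pf_factor_def by (auto simp: paperfold_def)
  have l: "length (pf_factor (Suc z) n) = n" unfolding pf_factor_def by simp
  have e: "mset (pf_factor (Suc z) n) = replicate_mset (length (pf_factor (Suc z) n) - count (mset (pf_factor (Suc z) n)) 1) 0 + replicate_mset (count (mset (pf_factor (Suc z) n)) 1) 1"
    using mset01[OF s] by blast
  show ?thesis unfolding MS_def cnt_def by (subst e) (simp only: l)
qed

lemma count_MS: "count (MS n k) 1 = k" unfolding MS_def by simp

lemma card_quot: "pf_abelian_complexity n = card (range (cnt n))"
proof -
  define R where "R = {(u::nat list, v). abelian_equiv u v}"
  define F where "F k = {v. MS n k = mset v}" for k
  have A: "{pf_factor i n | i. i \<ge> 1} = (\<lambda>z. pf_factor (Suc z) n) ` UNIV"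
  proof (rule set_eqI, rule iffI)
    fix x assume "x \<in> {pf_factor i n | i. i \<ge> 1}"
    then obtain i where "i \<ge> 1" "x = pf_factor i n" by blast
    then have "x = pf_factor (Suc (i - 1)) n" by simp
    then show "x \<in> (\<lambda>z. pf_factor (Suc z) n) ` UNIV" by blast
  qed auto
  have Rx: "R``{x} = {v. mset x = mset v}" for x unfolding R_def by (auto simp: abelian_equiv_def)
  have "{pf_factor i n | i. i \<ge> 1} // R = (\<lambda>z. F (cnt n z)) ` UNIV"
    unfolding quotient_def A F_def by (auto simp: Rx mset_pf)
  also have "\<dots> = F ` range (cnt n)" by auto
  finally have Q: "{pf_factor i n | i. i \<ge> 1} // R = F ` range (cnt n)" .
  have "inj F"
  proof (rule injI)
    fix k k' assume e: "F k = F k'"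
    obtain xs where xs: "mset xs = MS n k" using ex_mset by blast
    then have "xs \<in> F k" unfolding F_def by simp
    then have "xs \<in> F k'" using e by simp
    then have "MS n k = MS n k'" unfolding F_def using xs by simp
    then show "k = k'" using count_MS by metis
  qed
  then have "card (F ` range (cnt n)) = card (range (cnt n))"
    by (simp add: card_image inj_on_subset)
  then show ?thesis unfolding pf_abelian_complexity_def R_def[symmetric] Q .
qed

lemma rho_D: "pf_abelian_complexity n = card (range (D n))"
proof -
  have "range (D n) = (\<lambda>k. int n - 2 * int k) ` range (cnt n)"
    using cnt_D[of n] by (auto simp: image_comp)
  moreover have "inj (\<lambda>k. int n - 2 * int k)" by (auto simp: inj_def)
  ultimately show ?thesis unfolding card_quot by (simp add: card_image inj_on_subset)
qed

lemma rho_int: "int (pf_abelian_complexity n) = rhoH (Hd (n div 2)) (n mod 2)"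
  unfolding rho_D card_range_D using Mdp_nonneg[of n] unfolding Mdp_def by simp

lemma w_gen:
  assumes "\<forall>x\<in>set bs. x < 2" "b < 2"
  shows "int (pf_abelian_complexity (2 * valL bs n + b)) = rhoH (runL bs (Hd n)) b"
  using rho_int[of "2 * valL bs n + b"] Hd_runL[OF assms(1), of n] assms(2) by simp

theorem theorem1:
  shows "k_regular 2 (\<lambda>n. int (pf_abelian_complexity n))"
proof -
  define w where "w n = int (pf_abelian_complexity n)" for n
  have W: "w (2 * valL bs n + b) = rhoH (runL bs (Hd n)) b"
    if "\<forall>x\<in>set bs. x < 2" "b < 2" for bs b n
    unfolding w_def by (rule w_gen[OF that])
  have id: "w (2 * valL bs n + b) = w (2 * valL bs' n + b') + j"
    if "\<forall>x\<in>set bs. x < 2" "\<forall>x\<in>set bs'. x < 2" "b < 2" "b' < 2"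
      "\<forall>d\<in>set QL. rhoH (runL bs d) b = rhoH (runL bs' d) b' + j" for bs bs' b b' j n
    unfolding W[OF that(1,3)] W[OF that(2,4)] by (rule ident[OF that(5) that(3,4)])
  have I1: "w (4*n) = w (2*n)" for n
  proof -
    have E: "w (2 * valL [0] n + 0) = w (2 * valL [] n + 0) + 0"
      by (rule id[OF _ _ _ _ checks(1)]) simp_all
    have e1: "2 * valL [0] n + 0 = 4*n" and e2: "2 * valL [] n + 0 = 2*n" by (simp_all add: valL_def)
    show ?thesis using E unfolding e1 e2 by simp
  qed
  have I2: "w (4*n+2) = w (2*n+1) + 1" for n
  proof -
    have E: "w (2 * valL [1] n + 0) = w (2 * valL [] n + 1) + 1"
      by (rule id[OF _ _ _ _ checks(2)]) simp_all
    have e1: "2 * valL [1] n + 0 = 4*n+2" and e2: "2 * valL [] n + 1 = 2*n+1" by (simp_all add: valL_def)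
    show ?thesis using E unfolding e1 e2 by simp
  qed
  have I3: "w (8*n+1) = w (2*n) + 1" for n
  proof -
    have E: "w (2 * valL [0,0] n + 1) = w (2 * valL [] n + 0) + 1"
      by (rule id[OF _ _ _ _ checks(3)]) simp_all
    have e1: "2 * valL [0,0] n + 1 = 8*n+1" and e2: "2 * valL [] n + 0 = 2*n" by (simp_all add: valL_def)
    show ?thesis using E unfolding e1 e2 by simp
  qed
  have I4: "w (16*n+3) = w (2*n+1) + 2" for n
  proof -
    have E: "w (2 * valL [0,0,1] n + 1) = w (2 * valL [] n + 1) + 2"
      by (rule id[OF _ _ _ _ checks(4)]) simp_all
    have e1: "2 * valL [0,0,1] n + 1 = 16*n+3" and e2: "2 * valL [] n + 1 = 2*n+1" by (simp_all add: valL_def)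
    show ?thesis using E unfolding e1 e2 by simp
  qed
  have I5: "w (16*n+11) = w (4*n+3) + 2" for n
  proof -
    have E: "w (2 * valL [1,0,1] n + 1) = w (2 * valL [1] n + 1) + 2"
      by (rule id[OF _ _ _ _ checks(5)]) simp_all
    have e1: "2 * valL [1,0,1] n + 1 = 16*n+11" and e2: "2 * valL [1] n + 1 = 4*n+3" by (simp_all add: valL_def)
    show ?thesis using E unfolding e1 e2 by simp
  qed
  have I6: "w (16*n+5) = w (4*n+1) + 2" for n
  proof -
    have E: "w (2 * valL [0,1,0] n + 1) = w (2 * valL [0] n + 1) + 2"
      by (rule id[OF _ _ _ _ checks(6)]) simp_all
    have e1: "2 * valL [0,1,0] n + 1 = 16*n+5" and e2: "2 * valL [0] n + 1 = 4*n+1" by (simp_all add: valL_def)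
    show ?thesis using E unfolding e1 e2 by simp
  qed
  have I7: "w (16*n+13) = w (2*n+1) + 2" for n
  proof -
    have E: "w (2 * valL [1,1,0] n + 1) = w (2 * valL [] n + 1) + 2"
      by (rule id[OF _ _ _ _ checks(7)]) simp_all
    have e1: "2 * valL [1,1,0] n + 1 = 16*n+13" and e2: "2 * valL [] n + 1 = 2*n+1" by (simp_all add: valL_def)
    show ?thesis using E unfolding e1 e2 by simp
  qed
  have I8: "w (16*n+7) = w (2*n+1) + 2" for n
  proof -
    have E: "w (2 * valL [0,1,1] n + 1) = w (2 * valL [] n + 1) + 2"
      by (rule id[OF _ _ _ _ checks(8)]) simp_all
    have e1: "2 * valL [0,1,1] n + 1 = 16*n+7" and e2: "2 * valL [] n + 1 = 2*n+1" by (simp_all add: valL_def)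
    show ?thesis using E unfolding e1 e2 by simp
  qed
  have I9: "w (16*n+15) = w (8*n+7)" for n
  proof -
    have E: "w (2 * valL [1,1,1] n + 1) = w (2 * valL [1,1] n + 1) + 0"
      by (rule id[OF _ _ _ _ checks(9)]) simp_all
    have e1: "2 * valL [1,1,1] n + 1 = 16*n+15" and e2: "2 * valL [1,1] n + 1 = 8*n+7" by (simp_all add: valL_def)
    show ?thesis using E unfolding e1 e2 by simp
  qed
  have "k_regular 2 w" by (rule regular_from_ids[OF I1 I2 I3 I4 I5 I6 I7 I8 I9])
  then show ?thesis unfolding w_def[abs_def] .
qed


end
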